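(* For every integer $n\ge1$, \[ p(n,n-1)=\tfrac12\,n(n-1),\qquad u(n,n-1)=\tfrac12\,(n-1)(n-2). \]
   Context: $p(n,l)$ is the number of isomorphism classes of posets with $n$ elements whose longest chain has exactly $l$ elements; $u(n,l)$ is the number of those which are locally unsymmetric. Definitions: $\ell(X)$ is the cardinality of a longest chain of a poset $X$. A subset $A$ of a poset $X$ is maximally ordered in $X$ if $|\{(a,b)\in A\times A:a<b\}|$ is maximal among subsets of $X$ of cardinality $|A|$. For $\sigma\in\mathrm{Aut}(P)$, $\Sigma(\sigma)=\{a:\sigma(a)\ne a\}$. For a finite poset $Q$ and $r\ge2$: $\sigma$ is a $(Q,r)$-generator if there exist subsets $S_0,\dots,S_{r-1}\subset\Sigma(\sigma)$, each isomorphic to $Q$, which are smallest maximally ordered subsets of $\Sigma(\sigma)$ with $\sigma(S_i)=S_{(i+1)\bmod r}$, $\ell(S_i)=\ell(\Sigma(\sigma))$, $\bigcup_iS_i=\Sigma(\sigma)$; distinct $S_i,S_j$ are $(Q,r)$-symmetric subsets. Elements $a,b$ are $(Q,r,0)$-symmetric if $a=b$; $(Q,r,1)$-symmetric if there are $(Q,r)$-symmetric subsets $A,B$ with generator $\sigma$, $a\in A$, $b=\sigma^q(a)\in B$, $1\le q<r$; for $m\ge2$, $(Q,r,m)$-symmetric if not $(Q,r,j)$-symmetric for $j<m$ but there exist $c$, $j<m$ with $a$ $(Q,r,j)$-symmetric to $c$ and $c$ $(Q,r,m-j)$-symmetric to $b$; $(Q,r)$-symmetric if $(Q,r,m)$-symmetric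 for some $m\ge0$ (an equivalence relation). $P\oslash_rQ$ is the quotient poset of equivalence classes with $E\le F$ iff some $e\in E$, $f\in F$ satisfy $e\le f$. A poset $P$ is locally symmetric if $P\oslash_rQ\not\cong P$ for some finite poset $Q$ and some $r\ge2$; it is locally unsymmetric otherwise. *)

theory Defs
  imports Complex_Main
begin

definition is_poset :: "'a set \<Rightarrow> ('a \<Rightarrow> 'a \<Rightarrow> bool) \<Rightarrow> bool" where
  "is_poset A le \<longleftrightarrow>
     (\<forall>x y. le x y \<longrightarrow> x \<in> A \<and> y \<in> A) \<and>
     (\<forall>x\<in>A. le x x) \<and>
     (\<forall>x\<in>A. \<forall>y\<in>A. le x y \<and> le y x \<longrightarrow> x = y) \<and>
     (\<forall>x\<in>A. \<forall>y\<in>A. \<forall>z\<in>A. le x y \<and> le y z \<longrightarrow> le x z)"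

definition iso_btw :: "('a \<Rightarrow> 'b) \<Rightarrow> 'a set \<Rightarrow> ('a \<Rightarrow> 'a \<Rightarrow> bool) \<Rightarrow> 'b set \<Rightarrow> ('b \<Rightarrow> 'b \<Rightarrow> bool) \<Rightarrow> bool" where
  "iso_btw f A leA B leB \<longleftrightarrow> bij_betw f A B \<and> (\<forall>x\<in>A. \<forall>y\<in>A. leA x y \<longleftrightarrow> leB (f x) (f y))"

definition isomorphic :: "'a set \<Rightarrow> ('a \<Rightarrow> 'a \<Rightarrow> bool) \<Rightarrow> 'b set \<Rightarrow> ('b \<Rightarrow> 'b \<Rightarrow> bool) \<Rightarrow> bool" where
  "isomorphic A leA B leB \<longleftrightarrow> (\<exists>f. iso_btw f A leA B leB)"

definition is_chain :: "'a set \<Rightarrow> ('a \<Rightarrow> 'a \<Rightarrow> bool) \<Rightarrow> bool" where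
  "is_chain C le \<longleftrightarrow> (\<forall>x\<in>C. \<forall>y\<in>C. le x y \<or> le y x)"

definition height :: "'a set \<Rightarrow> ('a \<Rightarrow> 'a \<Rightarrow> bool) \<Rightarrow> nat" where
  "height X le = Max {card C | C. C \<subseteq> X \<and> is_chain C le}"

definition ord_pairs :: "'a set \<Rightarrow> ('a \<Rightarrow> 'a \<Rightarrow> bool) \<Rightarrow> nat" where
  "ord_pairs A le = card {(a, b). a \<in> A \<and> b \<in> A \<and> le a b \<and> a \<noteq> b}"

definition max_ordered :: "'a set \<Rightarrow> ('a \<Rightarrow> 'a \<Rightarrow> bool) \<Rightarrow> 'a set \<Rightarrow> bool" where
  "max_ordered X le A \<longleftrightarrow> A \<subseteq> X \<and>
     (\<forall>B. B \<subseteq> X \<and> card B = card A \<longrightarrow> ord_pairs B le \<le> ord_pairs A le)"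

definition smallest_max_ordered :: "'a set \<Rightarrow> ('a \<Rightarrow> 'a \<Rightarrow> bool) \<Rightarrow> 'a set \<Rightarrow> bool" where
  "smallest_max_ordered X le A \<longleftrightarrow> max_ordered X le A \<and> height A le = height X le \<and>
     (\<forall>B. max_ordered X le B \<and> height B le = height X le \<longrightarrow> card A \<le> card B)"

definition is_aut :: "'a set \<Rightarrow> ('a \<Rightarrow> 'a \<Rightarrow> bool) \<Rightarrow> ('a \<Rightarrow> 'a) \<Rightarrow> bool" where
  "is_aut P le \<sigma> \<longleftrightarrow> iso_btw \<sigma> P le P le"

definition moved :: "'a set \<Rightarrow> ('a \<Rightarrow> 'a) \<Rightarrow> 'a set" where
  "moved P \<sigma> = {a \<in> P. \<sigma> a \<noteq> a}"

definition gen_family :: "'a set \<Rightarrow> ('a \<Rightarrow> 'a \<Rightarrow> bool) \<Rightarrow> 'q set \<Rightarrow> ('q \<Rightarrow> 'q \<Rightarrow> bool) \<Rightarrow> nat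
     \<Rightarrow> ('a \<Rightarrow> 'a) \<Rightarrow> (nat \<Rightarrow> 'a set) \<Rightarrow> bool" where
  "gen_family P le Q leQ r \<sigma> S \<longleftrightarrow> is_aut P le \<sigma> \<and>
     (\<forall>i<r. S i \<subseteq> moved P \<sigma> \<and> isomorphic (S i) le Q leQ \<and>
            smallest_max_ordered (moved P \<sigma>) le (S i) \<and>
            \<sigma> ` S i = S ((i + 1) mod r) \<and>
            height (S i) le = height (moved P \<sigma>) le) \<and>
     (\<Union>i<r. S i) = moved P \<sigma>"

definition is_generator :: "'a set \<Rightarrow> ('a \<Rightarrow> 'a \<Rightarrow> bool) \<Rightarrow> 'q set \<Rightarrow> ('q \<Rightarrow> 'q \<Rightarrow> bool) \<Rightarrow> nat
     \<Rightarrow> ('a \<Rightarrow> 'a) \<Rightarrow> bool" where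
  "is_generator P le Q leQ r \<sigma> \<longleftrightarrow> (\<exists>S. gen_family P le Q leQ r \<sigma> S)"

definition sym1 :: "'a set \<Rightarrow> ('a \<Rightarrow> 'a \<Rightarrow> bool) \<Rightarrow> 'q set \<Rightarrow> ('q \<Rightarrow> 'q \<Rightarrow> bool) \<Rightarrow> nat
     \<Rightarrow> 'a \<Rightarrow> 'a \<Rightarrow> bool" where
  "sym1 P le Q leQ r a b \<longleftrightarrow>
     (\<exists>\<sigma> S i j q. gen_family P le Q leQ r \<sigma> S \<and> i < r \<and> j < r \<and> S i \<noteq> S j \<and>
        a \<in> S i \<and> 1 \<le> q \<and> q < r \<and> b = (\<sigma> ^^ q) a \<and> b \<in> S j)"

text \<open>(Q,r)-symmetry: (Q,r,m)-symmetric for some m; this is the reflexive-transitive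
  closure of (Q,r,1)-symmetry.\<close>
definition symQr :: "'a set \<Rightarrow> ('a \<Rightarrow> 'a \<Rightarrow> bool) \<Rightarrow> 'q set \<Rightarrow> ('q \<Rightarrow> 'q \<Rightarrow> bool) \<Rightarrow> nat
     \<Rightarrow> 'a \<Rightarrow> 'a \<Rightarrow> bool" where
  "symQr P le Q leQ r = (sym1 P le Q leQ r)\<^sup>*\<^sup>*"

definition quot_carrier :: "'a set \<Rightarrow> ('a \<Rightarrow> 'a \<Rightarrow> bool) \<Rightarrow> 'q set \<Rightarrow> ('q \<Rightarrow> 'q \<Rightarrow> bool) \<Rightarrow> nat
     \<Rightarrow> 'a set set" where
  "quot_carrier P le Q leQ r = (\<lambda>a. {b \<in> P. symQr P le Q leQ r a b}) ` P"

definition quot_le :: "('a \<Rightarrow> 'a \<Rightarrow> bool) \<Rightarrow> 'a set \<Rightarrow> 'a set \<Rightarrow> bool" where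
  "quot_le le E F \<longleftrightarrow> (\<exists>e\<in>E. \<exists>f\<in>F. le e f)"

definition locally_symmetric :: "'a set \<Rightarrow> ('a \<Rightarrow> 'a \<Rightarrow> bool) \<Rightarrow> bool" where
  "locally_symmetric P le \<longleftrightarrow>
     (\<exists>(Q :: nat set) leQ r. finite Q \<and> is_poset Q leQ \<and> 2 \<le> r \<and>
        \<not> isomorphic (quot_carrier P le Q leQ r) (quot_le le) P le)"

definition locally_unsymmetric :: "'a set \<Rightarrow> ('a \<Rightarrow> 'a \<Rightarrow> bool) \<Rightarrow> bool" where
  "locally_unsymmetric P le \<longleftrightarrow> \<not> locally_symmetric P le"

definition posets_nl :: "nat \<Rightarrow> nat \<Rightarrow> (nat \<Rightarrow> nat \<Rightarrow> bool) set" where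
  "posets_nl n l = {le. is_poset {0..<n} le \<and> height {0..<n} le = l}"

definition iso_rel :: "nat \<Rightarrow> ((nat \<Rightarrow> nat \<Rightarrow> bool) \<times> (nat \<Rightarrow> nat \<Rightarrow> bool)) set" where
  "iso_rel n = {(l1, l2). isomorphic {0..<n} l1 {0..<n} l2}"

definition p_count :: "nat \<Rightarrow> nat \<Rightarrow> nat" where
  "p_count n l = card (posets_nl n l // iso_rel n)"

definition u_count :: "nat \<Rightarrow> nat \<Rightarrow> nat" where
  "u_count n l = card ({le \<in> posets_nl n l. locally_unsymmetric {0..<n} le} // iso_rel n)"

end

theory Submission
  imports Defs
begin


lemma iso_btw_inv:
  assumes "iso_btw f A la B lb" shows "iso_btw (inv_into A f) B lb A la"
proof -
  have b: "bij_betw f A B" and o: "\<forall>x\<in>A. \<forall>y\<in>A. la x y \<longleftrightarrow> lb (f x) (f y)"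
    using assms unfolding iso_btw_def by auto
  have bi: "bij_betw (inv_into A f) B A" using b by (rule bij_betw_inv_into)
  show ?thesis unfolding iso_btw_def
  proof (intro conjI ballI bi)
    fix x y assume x: "x \<in> B" and y: "y \<in> B"
    have "inv_into A f x \<in> A" "inv_into A f y \<in> A" using bi x y bij_betwE by blast+
    moreover have "f (inv_into A f x) = x" "f (inv_into A f y) = y"
      using b x y by (simp_all add: bij_betw_inv_into_right)
    ultimately show "lb x y = la (inv_into A f x) (inv_into A f y)" using o by metis
  qed
qed

lemma iso_btw_comp:
  assumes "iso_btw f A la B lb" "iso_btw g B lb C lc" shows "iso_btw (g \<circ> f) A la C lc"
  using assms unfolding iso_btw_def
  by (auto intro: bij_betw_trans dest: bij_betwE)

lemma iso_btw_id: "iso_btw id A l A l"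
  unfolding iso_btw_def by auto

lemma isomorphic_sym: "isomorphic A la B lb \<Longrightarrow> isomorphic B lb A la"
  unfolding isomorphic_def using iso_btw_inv by blast

lemma isomorphic_trans: "isomorphic A la B lb \<Longrightarrow> isomorphic B lb C lc \<Longrightarrow> isomorphic A la C lc"
  unfolding isomorphic_def using iso_btw_comp by blast

lemma height_set_finite:
  assumes "finite A" shows "finite {card C | C. C \<subseteq> A \<and> is_chain C le}"
proof -
  have "{card C | C. C \<subseteq> A \<and> is_chain C le} \<subseteq> {..card A}"
    using assms by (auto intro: card_mono)
  thus ?thesis using finite_subset by blast
qed

lemma height_ge:
  assumes "finite A" "C \<subseteq> A" "is_chain C le" shows "card C \<le> height A le"
  unfolding height_def using assms height_set_finite[OF assms(1)] by (auto intro: Max_ge)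

lemma height_attained:
  assumes "finite A" shows "\<exists>C. C \<subseteq> A \<and> is_chain C le \<and> card C = height A le"
proof -
  have ne: "{card C | C. C \<subseteq> A \<and> is_chain C le} \<noteq> {}"
  proof -
    have "(0::nat) \<in> {card C | C. C \<subseteq> A \<and> is_chain C le}"
      by (auto simp: is_chain_def intro!: exI[of _ "{}"])
    thus ?thesis by blast
  qed
  have "height A le \<in> {card C | C. C \<subseteq> A \<and> is_chain C le}"
    unfolding height_def using Max_in[OF height_set_finite[OF assms] ne] .
  thus ?thesis by auto
qed

lemma height_le:
  assumes "finite A" "\<And>C. C \<subseteq> A \<Longrightarrow> is_chain C le \<Longrightarrow> card C \<le> k" shows "height A le \<le> k"
  using height_attained[OF assms(1), of le] assms(2) by metis

lemma height_empty: "height {} le = 0"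
  using height_le[of "{}" le 0] by auto



definition twins :: "'a set \<Rightarrow> ('a \<Rightarrow> 'a \<Rightarrow> bool) \<Rightarrow> 'a \<Rightarrow> 'a \<Rightarrow> bool" where
  "twins P le a b \<longleftrightarrow> a \<in> P \<and> b \<in> P \<and> a \<noteq> b \<and> \<not> le a b \<and> \<not> le b a \<and>
     (\<forall>c\<in>P. c \<noteq> a \<longrightarrow> c \<noteq> b \<longrightarrow> (le a c \<longleftrightarrow> le b c) \<and> (le c a \<longleftrightarrow> le c b))"

lemma ord_pairs_single: "ord_pairs {c} le = 0"
proof -
  have e: "{(a, b). a \<in> {c} \<and> b \<in> {c} \<and> le a b \<and> a \<noteq> b} = {}" by auto
  show ?thesis unfolding ord_pairs_def e by simp
qed

lemma height_single: assumes "le a a" shows "height {a} le = 1"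
proof (rule antisym)
  show "height {a} le \<le> 1" by (rule height_le) (auto intro: card_mono[of "{a}", simplified])
  show "1 \<le> height {a} le" using height_ge[of "{a}" "{a}" le] assms by (auto simp: is_chain_def)
qed

lemma sub2: "C \<subseteq> {a, b} \<Longrightarrow> C = {} \<or> C = {a} \<or> C = {b} \<or> C = {a, b}"
  by blast

lemma height_pair: assumes "le a a" "\<not> le a b" "\<not> le b a" shows "height {a, b} le = 1"
proof (rule antisym)
  show "height {a, b} le \<le> 1"
  proof (rule height_le)
    fix C assume "C \<subseteq> {a, b}" "is_chain C le"
    thus "card C \<le> 1" using sub2[of C a b] assms by (auto simp: is_chain_def)
  qed simp
  show "1 \<le> height {a, b} le" using height_ge[of "{a,b}" "{a}" le] assms by (auto simp: is_chain_def)
qed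

lemma twins_locally_symmetric:
  assumes po: "is_poset P le" and fin: "finite P" and tw: "twins P le a b"
  shows "locally_symmetric P le"
proof -
  have aP: "a \<in> P" and bP: "b \<in> P" and ab: "a \<noteq> b" and nab: "\<not> le a b" and nba: "\<not> le b a"
    and oth: "\<And>c. c \<in> P \<Longrightarrow> c \<noteq> a \<Longrightarrow> c \<noteq> b \<Longrightarrow> (le a c \<longleftrightarrow> le b c) \<and> (le c a \<longleftrightarrow> le c b)"
    using tw unfolding twins_def by auto
  have refl: "\<And>x. x \<in> P \<Longrightarrow> le x x" using po unfolding is_poset_def by blast
  define \<sigma> where "\<sigma> = (\<lambda>c. if c = a then b else if c = b then a else c)"
  define S where "S = (\<lambda>i::nat. if i = 0 then {a} else {b})"
  define Q where "Q = {0::nat}"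
  define leQ where "leQ = (\<lambda>(x::nat) (y::nat). x = 0 \<and> y = 0)"
  have ss: "\<And>c. \<sigma> (\<sigma> c) = c" unfolding \<sigma>_def by auto
  have sP: "\<And>c. c \<in> P \<Longrightarrow> \<sigma> c \<in> P" unfolding \<sigma>_def using aP bP by auto
  have bij: "bij_betw \<sigma> P P" by (rule bij_betw_byWitness[of P \<sigma> \<sigma> P]) (auto simp: sP ss)
  have aut: "is_aut P le \<sigma>"
    unfolding is_aut_def iso_btw_def
  proof (intro conjI bij ballI)
    fix x y assume x: "x \<in> P" and y: "y \<in> P"
    show "le x y = le (\<sigma> x) (\<sigma> y)"
      using oth[OF x] oth[OF y] refl[OF x] refl[OF y] refl[OF aP] refl[OF bP] ab nab nba
      by (cases "x = a"; cases "x = b"; cases "y = a"; cases "y = b") (simp_all add: \<sigma>_def)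
  qed
  have mv: "moved P \<sigma> = {a, b}" unfolding moved_def \<sigma>_def using aP bP ab by auto
  have hmv: "height (moved P \<sigma>) le = 1" unfolding mv by (rule height_pair) (auto simp: refl aP nab nba)
  have hS: "\<And>i. height (S i) le = 1" unfolding S_def using height_single[of le a] height_single[of le b] refl aP bP by auto
  have mo: "\<And>i. max_ordered (moved P \<sigma>) le (S i)"
    unfolding max_ordered_def mv S_def
  proof (intro allI impI conjI)
    fix i :: nat and B assume B: "B \<subseteq> {a, b} \<and> card B = card (if i = 0 then {a} else {b})"
    then obtain c where "B = {c}" by (auto simp: card_Suc_eq split: if_splits)
    thus "ord_pairs B le \<le> ord_pairs (if i = 0 then {a} else {b}) le" by (simp add: ord_pairs_single)
  qed auto
  have smo: "\<And>i. smallest_max_ordered (moved P \<sigma>) le (S i)"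
    unfolding smallest_max_ordered_def
  proof (intro allI impI conjI mo)
    fix i and B assume B: "max_ordered (moved P \<sigma>) le B \<and> height B le = height (moved P \<sigma>) le"
    hence "B \<subseteq> {a, b}" "B \<noteq> {}" using mv hmv height_empty[of le] unfolding max_ordered_def by auto
    hence "card B \<ge> 1" by (metis One_nat_def Suc_leI card_gt_0_iff finite.emptyI finite.insertI finite_subset)
    thus "card (S i) \<le> card B" unfolding S_def by auto
  qed (simp add: hS hmv)
  have isoQ: "\<And>i. isomorphic (S i) le Q leQ"
    unfolding isomorphic_def S_def Q_def leQ_def
    apply (rule exI[of _ "\<lambda>_. 0"])
    using refl[OF aP] refl[OF bP] by (simp add: iso_btw_def bij_betw_def)
  have gf: "gen_family P le Q leQ 2 \<sigma> S"
    unfolding gen_family_def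
  proof (intro conjI aut allI impI)
    fix i :: nat assume i: "i < 2"
    show "S i \<subseteq> moved P \<sigma>" unfolding mv S_def by auto
    show "isomorphic (S i) le Q leQ" by (rule isoQ)
    show "smallest_max_ordered (moved P \<sigma>) le (S i)" by (rule smo)
    show "\<sigma> ` S i = S ((i + 1) mod 2)" using i unfolding S_def \<sigma>_def by (auto simp: less_2_cases_iff)
    show "height (S i) le = height (moved P \<sigma>) le" by (simp add: hS hmv)
  next
    show "(\<Union>i<2. S i) = moved P \<sigma>" unfolding mv S_def by (auto simp: lessThan_nat_numeral)
  qed
  have S0: "S 0 = {a}" and S1: "S 1 = {b}" by (simp_all add: S_def)
  have sa: "\<sigma> a = b" and sb: "\<sigma> b = a" using ab by (simp_all add: \<sigma>_def)
  have s1: "sym1 P le Q leQ 2 a b" unfolding sym1_def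
    apply (rule exI[of _ \<sigma>], rule exI[of _ S], rule exI[of _ 0], rule exI[of _ 1], rule exI[of _ 1])
    using gf ab S0 S1 sa by simp
  have s2: "sym1 P le Q leQ 2 b a" unfolding sym1_def
    apply (rule exI[of _ \<sigma>], rule exI[of _ S], rule exI[of _ 1], rule exI[of _ 0], rule exI[of _ 1])
    using gf ab S0 S1 sb by simp
  define g where "g = (\<lambda>x. {y \<in> P. symQr P le Q leQ 2 x y})"
  have gab: "g a = g b"
  proof -
    have r1: "(sym1 P le Q leQ 2)\<^sup>*\<^sup>* a b" using s1 by blast
    have r2: "(sym1 P le Q leQ 2)\<^sup>*\<^sup>* b a" using s2 by blast
    show ?thesis unfolding g_def symQr_def
    proof (rule Collect_cong)
      fix y show "(y \<in> P \<and> (sym1 P le Q leQ 2)\<^sup>*\<^sup>* a y) = (y \<in> P \<and> (sym1 P le Q leQ 2)\<^sup>*\<^sup>* b y)"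
        using rtranclp_trans[OF r1, of y] rtranclp_trans[OF r2, of y] by blast
    qed
  qed
  have "\<not> isomorphic (quot_carrier P le Q leQ 2) (quot_le le) P le"
  proof
    assume "isomorphic (quot_carrier P le Q leQ 2) (quot_le le) P le"
    then obtain f where "bij_betw f (g ` P) P" unfolding isomorphic_def iso_btw_def quot_carrier_def g_def by auto
    hence "card (g ` P) = card P" by (rule bij_betw_same_card)
    hence "inj_on g P" using fin by (simp add: eq_card_imp_inj_on)
    thus False using gab aP bP ab by (auto dest: inj_onD)
  qed
  moreover have "finite Q" "is_poset Q leQ" unfolding Q_def leQ_def is_poset_def by auto
  ultimately show ?thesis unfolding locally_symmetric_def by blast
qed

lemma rigid_locally_unsymmetric:
  assumes rig: "\<And>\<sigma> x. is_aut P le \<sigma> \<Longrightarrow> x \<in> P \<Longrightarrow> \<sigma> x = x"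
  shows "locally_unsymmetric P le"
proof -
  have "isomorphic (quot_carrier P le Q leQ r) (quot_le le) P le" for Q :: "nat set" and leQ r
  proof -
    have ns: "\<not> sym1 P le Q leQ r x y" for x y
    proof
      assume "sym1 P le Q leQ r x y"
      then obtain \<sigma> S i j where gf: "gen_family P le Q leQ r \<sigma> S" and ij: "i < r" "j < r" "S i \<noteq> S j"
        unfolding sym1_def by blast
      have "moved P \<sigma> = {}" using gf rig unfolding gen_family_def moved_def by auto
      thus False using gf ij unfolding gen_family_def by auto
    qed
    have rt: "symQr P le Q leQ r x y \<longleftrightarrow> x = y" for x y
    proof
      assume "symQr P le Q leQ r x y"
      thus "x = y" unfolding symQr_def by (induction rule: rtranclp_induct) (auto simp: ns)
    qed (simp add: symQr_def)
    have qc: "quot_carrier P le Q leQ r = (\<lambda>x. {x}) ` P"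
      unfolding quot_carrier_def rt by (rule image_cong) auto
    have "iso_btw the_elem ((\<lambda>x. {x}) ` P) (quot_le le) P le"
      unfolding iso_btw_def quot_le_def
    proof (intro conjI ballI)
      show "bij_betw the_elem ((\<lambda>x. {x}) ` P) P"
        by (rule bij_betw_imageI) (auto simp: inj_on_def image_image)
    qed auto
    thus ?thesis unfolding qc isomorphic_def by blast
  qed
  thus ?thesis unfolding locally_unsymmetric_def locally_symmetric_def by blast
qed



definition canon :: "nat \<Rightarrow> nat \<Rightarrow> nat \<Rightarrow> nat \<Rightarrow> nat \<Rightarrow> bool" where
  "canon n i j a b \<longleftrightarrow> a < n \<and> b < n \<and>
     ((a < n - 1 \<and> b < n - 1 \<and> a \<le> b) \<or> (a = n - 1 \<and> b = n - 1) \<or>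
      (a < n - 1 \<and> b = n - 1 \<and> a < i) \<or> (a = n - 1 \<and> b < n - 1 \<and> j < b))"

lemma canon_poset: assumes "i \<le> j" shows "is_poset {0..<n} (canon n i j)"
  unfolding is_poset_def canon_def using assms by auto

lemma canon_height: assumes "i \<le> j" "j < n - 1" shows "height {0..<n} (canon n i j) = n - 1"
proof (rule antisym)
  show "height {0..<n} (canon n i j) \<le> n - 1"
  proof (rule height_le)
    fix C assume C: "C \<subseteq> {0..<n}" "is_chain C (canon n i j)"
    have "C \<noteq> {0..<n}"
    proof
      assume "C = {0..<n}"
      hence "i \<in> C" "n - 1 \<in> C" using assms by auto
      hence "canon n i j i (n - 1) \<or> canon n i j (n - 1) i" using C(2) unfolding is_chain_def by blast
      thus False using assms unfolding canon_def by auto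
    qed
    hence "C \<subset> {0..<n}" using C by auto
    hence "card C < card {0..<n}" by (rule psubset_card_mono[rotated]) simp
    thus "card C \<le> n - 1" by simp
  qed simp
  show "n - 1 \<le> height {0..<n} (canon n i j)"
  proof -
    have "is_chain {0..<n-1} (canon n i j)" unfolding is_chain_def canon_def by auto
    thus ?thesis using height_ge[of "{0..<n}" "{0..<n-1}" "canon n i j"] by auto
  qed
qed

definition univ :: "'a set \<Rightarrow> ('a \<Rightarrow> 'a \<Rightarrow> bool) \<Rightarrow> 'a set" where
  "univ A le = {a \<in> A. \<forall>b\<in>A. le a b \<or> le b a}"

definition lowu :: "'a set \<Rightarrow> ('a \<Rightarrow> 'a \<Rightarrow> bool) \<Rightarrow> 'a set" where
  "lowu A le = {a \<in> A. (\<forall>b\<in>A. le a b \<or> le b a) \<and> (\<exists>b\<in>A. \<not> (\<forall>c\<in>A. le b c \<or> le c b) \<and> le a b)}"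

lemma iso_facts:
  assumes "iso_btw f A la B lb"
  shows "inj_on f A" "f ` A = B" "\<And>x y. x \<in> A \<Longrightarrow> y \<in> A \<Longrightarrow> la x y \<longleftrightarrow> lb (f x) (f y)"
  using assms unfolding iso_btw_def bij_betw_def by auto

lemma ball_img: "f ` A = B \<Longrightarrow> (\<forall>c\<in>B. R c) \<longleftrightarrow> (\<forall>a\<in>A. R (f a))" by auto
lemma bex_img: "f ` A = B \<Longrightarrow> (\<exists>c\<in>B. R c) \<longleftrightarrow> (\<exists>a\<in>A. R (f a))" by auto

lemma img_collect:
  assumes "f ` A = B" "\<And>a. a \<in> A \<Longrightarrow> P a \<longleftrightarrow> Q (f a)"
  shows "f ` {a \<in> A. P a} = {b \<in> B. Q b}"
  using assms by auto

lemma card_img_collect: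
  assumes "inj_on f A" "f ` A = B" "\<And>a. a \<in> A \<Longrightarrow> P a \<longleftrightarrow> Q (f a)"
  shows "card {a \<in> A. P a} = card {b \<in> B. Q b}"
proof -
  have "card (f ` {a \<in> A. P a}) = card {a \<in> A. P a}"
    by (rule card_image) (rule inj_on_subset[OF assms(1)], auto)
  thus ?thesis using img_collect[of f A B P Q] assms by simp
qed

lemma univ_card_iso:
  assumes "iso_btw f A la B lb" shows "card (univ A la) = card (univ B lb)"
proof -
  note I = iso_facts[OF assms]
  show ?thesis unfolding univ_def
  proof (rule card_img_collect[OF I(1) I(2)])
    fix a assume a: "a \<in> A"
    show "(\<forall>b\<in>A. la a b \<or> la b a) = (\<forall>b\<in>B. lb (f a) b \<or> lb b (f a))"
      unfolding ball_img[OF I(2)] using I(3)[OF a] I(3)[OF _ a] by auto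
  qed
qed

lemma lowu_card_iso:
  assumes "iso_btw f A la B lb" shows "card (lowu A la) = card (lowu B lb)"
proof -
  note I = iso_facts[OF assms]
  show ?thesis unfolding lowu_def
  proof (rule card_img_collect[OF I(1) I(2)])
    fix a assume a: "a \<in> A"
    have u: "(\<forall>c\<in>A. la x c \<or> la c x) = (\<forall>c\<in>B. lb (f x) c \<or> lb c (f x))" if x: "x \<in> A" for x
      unfolding ball_img[OF I(2)] using I(3)[OF x] I(3)[OF _ x] by auto
    show "((\<forall>b\<in>A. la a b \<or> la b a) \<and> (\<exists>b\<in>A. \<not> (\<forall>c\<in>A. la b c \<or> la c b) \<and> la a b)) =
          ((\<forall>b\<in>B. lb (f a) b \<or> lb b (f a)) \<and> (\<exists>b\<in>B. \<not> (\<forall>c\<in>B. lb b c \<or> lb c b) \<and> lb (f a) b))"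
    proof -
      have "(\<exists>b\<in>A. \<not> (\<forall>c\<in>A. la b c \<or> la c b) \<and> la a b) =
            (\<exists>b\<in>A. \<not> (\<forall>c\<in>B. lb (f b) c \<or> lb c (f b)) \<and> lb (f a) (f b))"
      proof (rule bex_cong[OF refl])
        fix b assume b: "b \<in> A"
        show "(\<not> (\<forall>c\<in>A. la b c \<or> la c b) \<and> la a b) = (\<not> (\<forall>c\<in>B. lb (f b) c \<or> lb c (f b)) \<and> lb (f a) (f b))"
          using u[OF b] I(3)[OF a b] by simp
      qed
      thus ?thesis unfolding bex_img[OF I(2)] u[OF a] by simp
    qed
  qed
qed

lemma canon_univ: assumes "i \<le> j" "j < n - 1"
  shows "univ {0..<n} (canon n i j) = {..<i} \<union> {j<..<n-1}"
proof -
  have x: "n - 1 \<notin> univ {0..<n} (canon n i j)"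
  proof
    assume "n - 1 \<in> univ {0..<n} (canon n i j)"
    hence "canon n i j (n-1) i \<or> canon n i j i (n-1)" unfolding univ_def using assms by auto
    thus False using assms unfolding canon_def by auto
  qed
  have kk: "k \<in> univ {0..<n} (canon n i j) \<longleftrightarrow> k \<in> {..<i} \<union> {j<..<n-1}" if k: "k \<noteq> n - 1" for k
  proof
    assume "k \<in> univ {0..<n} (canon n i j)"
    hence "k < n" "canon n i j (n-1) k \<or> canon n i j k (n-1)" unfolding univ_def using assms by auto
    thus "k \<in> {..<i} \<union> {j<..<n-1}" using k assms unfolding canon_def by auto
  next
    assume "k \<in> {..<i} \<union> {j<..<n-1}"
    hence "k < n - 1" "k < i \<or> j < k" using assms by auto
    hence "canon n i j k b \<or> canon n i j b k" if "b < n" for b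
      using assms that unfolding canon_def by (cases "b = n - 1") auto
    thus "k \<in> univ {0..<n} (canon n i j)" using \<open>k < n - 1\<close> unfolding univ_def by auto
  qed
  show ?thesis
  proof (rule set_eqI)
    fix k show "k \<in> univ {0..<n} (canon n i j) \<longleftrightarrow> k \<in> {..<i} \<union> {j<..<n-1}"
      using x kk[of k] assms by (cases "k = n - 1") auto
  qed
qed

lemma canon_lowu: assumes "i \<le> j" "j < n - 1"
  shows "lowu {0..<n} (canon n i j) = {..<i}"
proof -
  have lu: "lowu A le = {a \<in> univ A le. \<exists>b\<in>A. b \<notin> univ A le \<and> le a b}" for A and le :: "'b \<Rightarrow> 'b \<Rightarrow> bool"
    unfolding lowu_def univ_def by auto
  have U: "univ {0..<n} (canon n i j) = {..<i} \<union> {j<..<n-1}" by (rule canon_univ[OF assms])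
  have "a \<in> {a \<in> {..<i} \<union> {j<..<n-1}. \<exists>b\<in>{0..<n}. b \<notin> {..<i} \<union> {j<..<n-1} \<and> canon n i j a b}
     \<longleftrightarrow> a \<in> {..<i}" for a
  proof
    assume "a \<in> {a \<in> {..<i} \<union> {j<..<n-1}. \<exists>b\<in>{0..<n}. b \<notin> {..<i} \<union> {j<..<n-1} \<and> canon n i j a b}"
    then obtain b where "a \<in> {..<i} \<union> {j<..<n-1}" "b \<in> {0..<n}" "b \<notin> {..<i} \<union> {j<..<n-1}" "canon n i j a b"
      by blast
    thus "a \<in> {..<i}" using assms unfolding canon_def by auto
  next
    assume a: "a \<in> {..<i}"
    have "canon n i j a (n - 1)" "n - 1 \<notin> {..<i} \<union> {j<..<n-1}" "n - 1 \<in> {0..<n}"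
      using a assms by (auto simp: canon_def)
    thus "a \<in> {a \<in> {..<i} \<union> {j<..<n-1}. \<exists>b\<in>{0..<n}. b \<notin> {..<i} \<union> {j<..<n-1} \<and> canon n i j a b}"
      using a by blast
  qed
  thus ?thesis unfolding lu U by blast
qed

lemma canon_card_univ: assumes "i \<le> j" "j < n - 1"
  shows "card (univ {0..<n} (canon n i j)) = i + (n - 2 - j)"
proof -
  have "card ({..<i} \<union> {j<..<n-1}) = card {..<i} + card {j<..<n-1}"
    by (rule card_Un_disjoint) (use assms in auto)
  thus ?thesis using canon_univ[OF assms] by simp
qed

lemma canon_iso_inj:
  assumes "i \<le> j" "j < n - 1" "i' \<le> j'" "j' < n - 1"
    and "isomorphic {0..<n} (canon n i j) {0..<n} (canon n i' j')"
  shows "i = i' \<and> j = j'"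
proof -
  obtain f where f: "iso_btw f {0..<n} (canon n i j) {0..<n} (canon n i' j')"
    using assms(5) unfolding isomorphic_def by blast
  have "i = i'" using lowu_card_iso[OF f] canon_lowu[OF assms(1,2)] canon_lowu[OF assms(3,4)] by simp
  moreover have "i + (n - 2 - j) = i' + (n - 2 - j')"
    using univ_card_iso[OF f] canon_card_univ[OF assms(1,2)] canon_card_univ[OF assms(3,4)] by simp
  ultimately show ?thesis using assms by auto
qed



lemma canon_inc_top: assumes "i \<le> j" "j < n - 1"
  shows "{b \<in> {0..<n}. \<not> canon n i j (n-1) b \<and> \<not> canon n i j b (n-1)} = {i..j}"
  using assms unfolding canon_def by auto

lemma canon_inc_low: assumes "i \<le> j" "j < n - 1" "k < n - 1"
  shows "{b \<in> {0..<n}. \<not> canon n i j k b \<and> \<not> canon n i j b k} \<subseteq> {n - 1}"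
  using assms unfolding canon_def by auto

lemma canon_below: assumes "c < n - 1"
  shows "{b \<in> {0..<n}. b \<noteq> n - 1 \<and> canon n i j b c \<and> b \<noteq> c} = {..<c}"
  using assms unfolding canon_def by auto

lemma canon_rigid:
  assumes ij: "i < j" "j < n - 1" and aut: "is_aut {0..<n} (canon n i j) \<sigma>" and x: "x \<in> {0..<n}"
  shows "\<sigma> x = x"
proof -
  let ?P = "{0..<n}" and ?le = "canon n i j"
  note I = iso_facts[OF aut[unfolded is_aut_def]]
  have sP: "\<sigma> a \<in> ?P" if "a \<in> ?P" for a using I(2) that by blast
  have inc: "card {b \<in> ?P. \<not> ?le a b \<and> \<not> ?le b a} = card {b \<in> ?P. \<not> ?le (\<sigma> a) b \<and> \<not> ?le b (\<sigma> a)}"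
    if a: "a \<in> ?P" for a
    by (rule card_img_collect[OF I(1) I(2)]) (use I(3)[OF a] I(3)[OF _ a] in auto)
  have top: "n - 1 \<in> ?P" using ij by auto
  have st: "\<sigma> (n - 1) = n - 1"
  proof (rule ccontr)
    assume ne: "\<sigma> (n - 1) \<noteq> n - 1"
    have lt: "\<sigma> (n - 1) < n - 1" using sP[OF top] ne by auto
    have "card {b \<in> ?P. \<not> ?le (\<sigma> (n-1)) b \<and> \<not> ?le b (\<sigma> (n-1))} \<le> card {n - 1}"
      by (rule card_mono) (use canon_inc_low[OF _ ij(2) lt, of i] ij in auto)
    moreover have "card {b \<in> ?P. \<not> ?le (n-1) b \<and> \<not> ?le b (n-1)} = j + 1 - i"
      using canon_inc_top[of i j n] ij by simp
    ultimately show False using inc[OF top] ij by simp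
  qed
  show ?thesis
  proof (cases "x = n - 1")
    case True thus ?thesis using st by simp
  next
    case False
    hence xl: "x < n - 1" using x by auto
    have sx: "\<sigma> x \<noteq> n - 1" using False st I(1) x top by (metis inj_onD)
    hence sxl: "\<sigma> x < n - 1" using sP[OF x] by auto
    have "card {b \<in> ?P. b \<noteq> n - 1 \<and> ?le b x \<and> b \<noteq> x} = card {b \<in> ?P. b \<noteq> n - 1 \<and> ?le b (\<sigma> x) \<and> b \<noteq> \<sigma> x}"
    proof (rule card_img_collect[OF I(1) I(2)])
      fix b assume b: "b \<in> ?P"
      have "b \<noteq> n - 1 \<longleftrightarrow> \<sigma> b \<noteq> n - 1" using st I(1) b top by (metis inj_onD)
      moreover have "b \<noteq> x \<longleftrightarrow> \<sigma> b \<noteq> \<sigma> x" using I(1) b x by (metis inj_onD)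
      ultimately show "(b \<noteq> n - 1 \<and> ?le b x \<and> b \<noteq> x) = (\<sigma> b \<noteq> n - 1 \<and> ?le (\<sigma> b) (\<sigma> x) \<and> \<sigma> b \<noteq> \<sigma> x)"
        using I(3)[OF b x] by simp
    qed
    thus ?thesis unfolding canon_below[OF xl] canon_below[OF sxl] by simp
  qed
qed

lemma canon_twins: assumes "i < n - 1" shows "twins {0..<n} (canon n i i) i (n - 1)"
  using assms unfolding twins_def canon_def by auto

lemma twins_iso:
  assumes f: "iso_btw f A la B lb" and tw: "twins A la a b"
  shows "twins B lb (f a) (f b)"
proof -
  note I = iso_facts[OF f]
  have aA: "a \<in> A" and bA: "b \<in> A" and ab: "a \<noteq> b" and nab: "\<not> la a b" and nba: "\<not> la b a"
    and oth: "\<And>c. c \<in> A \<Longrightarrow> c \<noteq> a \<Longrightarrow> c \<noteq> b \<Longrightarrow> (la a c \<longleftrightarrow> la b c) \<and> (la c a \<longleftrightarrow> la c b)"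
    using tw unfolding twins_def by auto
  have "f a \<noteq> f b" using I(1) aA bA ab by (metis inj_onD)
  moreover have "\<forall>c\<in>B. c \<noteq> f a \<longrightarrow> c \<noteq> f b \<longrightarrow> (lb (f a) c \<longleftrightarrow> lb (f b) c) \<and> (lb c (f a) \<longleftrightarrow> lb c (f b))"
  proof
    fix c assume "c \<in> B"
    then obtain d where d: "d \<in> A" "c = f d" using I(2) by blast
    show "c \<noteq> f a \<longrightarrow> c \<noteq> f b \<longrightarrow> (lb (f a) c \<longleftrightarrow> lb (f b) c) \<and> (lb c (f a) \<longleftrightarrow> lb c (f b))"
      using oth[OF d(1)] I(3)[OF aA d(1)] I(3)[OF bA d(1)] I(3)[OF d(1) aA] I(3)[OF d(1) bA] d(2) by auto
  qed
  ultimately show ?thesis unfolding twins_def using I(2) aA bA nab nba I(3)[OF aA bA] I(3)[OF bA aA] by auto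
qed



lemma classify:
  assumes n2: "2 \<le> n" and po: "is_poset {0..<n} le" and ht: "height {0..<n} le = n - 1"
  shows "\<exists>i j. i \<le> j \<and> j < n - 1 \<and> isomorphic {0..<n} le {0..<n} (canon n i j)"
proof -
  define P where "P = {0..<n}"
  have fin: "finite P" unfolding P_def by simp
  have cP: "card P = n" unfolding P_def by simp
  have refl: "\<And>a. a \<in> P \<Longrightarrow> le a a" using po unfolding is_poset_def P_def by blast
  have anti: "\<And>a b. a \<in> P \<Longrightarrow> b \<in> P \<Longrightarrow> le a b \<Longrightarrow> le b a \<Longrightarrow> a = b"
    using po unfolding is_poset_def P_def by blast
  have trans: "\<And>a b c. a \<in> P \<Longrightarrow> b \<in> P \<Longrightarrow> c \<in> P \<Longrightarrow> le a b \<Longrightarrow> le b c \<Longrightarrow> le a c"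
    using po unfolding is_poset_def P_def by blast
  obtain C where CP: "C \<subseteq> P" and ch: "is_chain C le" and cC: "card C = n - 1"
    using height_attained[OF fin, of le] ht unfolding P_def by auto
  have maxch: "\<And>C'. C' \<subseteq> P \<Longrightarrow> is_chain C' le \<Longrightarrow> card C' \<le> n - 1"
    using height_ge[OF fin] ht unfolding P_def by metis
  have finC: "finite C" using CP fin finite_subset by blast
  have "card (P - C) = 1" using cC cP CP fin n2 by (simp add: card_Diff_subset finC)
  then obtain x where Px: "P - C = {x}" by (rule card_1_singletonE)
  have xP: "x \<in> P" and xC: "x \<notin> C" using Px by auto
  have PC: "P = insert x C" using Px CP by auto
  have chC: "\<And>a b. a \<in> C \<Longrightarrow> b \<in> C \<Longrightarrow> le a b \<or> le b a" using ch unfolding is_chain_def by blast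
  have inP: "\<And>a. a \<in> C \<Longrightarrow> a \<in> P" using CP by blast
  define rk where "rk = (\<lambda>c. card {c' \<in> C. le c' c \<and> c' \<noteq> c})"
  have rk_lt: "rk c < rk c'" if c: "c \<in> C" "c' \<in> C" "le c c'" "c \<noteq> c'" for c c'
  proof -
    have "insert c {d \<in> C. le d c \<and> d \<noteq> c} \<subseteq> {d \<in> C. le d c' \<and> d \<noteq> c'}"
      using c trans[OF inP inP inP] anti[OF inP inP] by blast
    hence "card (insert c {d \<in> C. le d c \<and> d \<noteq> c}) \<le> rk c'"
      unfolding rk_def by (rule card_mono[rotated]) (simp add: finC)
    moreover have "card (insert c {d \<in> C. le d c \<and> d \<noteq> c}) = rk c + 1"
      unfolding rk_def using finC by simp
    ultimately show ?thesis by simp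
  qed
  have rk_mono: "le c c' \<longleftrightarrow> rk c \<le> rk c'" if c: "c \<in> C" "c' \<in> C" for c c'
  proof
    assume "le c c'" thus "rk c \<le> rk c'" using rk_lt[OF c] by (cases "c = c'") auto
  next
    assume r: "rk c \<le> rk c'"
    show "le c c'"
    proof (rule ccontr)
      assume "\<not> le c c'"
      hence "le c' c" "c' \<noteq> c" using chC[OF c] refl[OF inP[OF c(1)]] by auto
      thus False using rk_lt[OF c(2) c(1)] r by simp
    qed
  qed
  have rk_inj: "inj_on rk C"
  proof (rule inj_onI)
    fix c c' assume c: "c \<in> C" "c' \<in> C" "rk c = rk c'"
    thus "c = c'" using rk_mono[OF c(1,2)] rk_mono[OF c(2,1)] anti[OF inP inP] by simp
  qed
  have rk_bd: "rk c < n - 1" if c: "c \<in> C" for c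
  proof -
    have "{d \<in> C. le d c \<and> d \<noteq> c} \<subseteq> C - {c}" by auto
    hence "rk c \<le> card (C - {c})" unfolding rk_def by (rule card_mono[rotated]) (simp add: finC)
    thus ?thesis using c cC n2 finC by (simp add: card_Diff_singleton)
  qed
  have rk_img: "rk ` C = {..<n - 1}"
  proof (rule card_subset_eq)
    show "rk ` C \<subseteq> {..<n - 1}" using rk_bd by auto
    show "card (rk ` C) = card {..<n - 1}" using card_image[OF rk_inj] cC by simp
  qed simp
  have cnt: "card {c \<in> C. Q (rk c)} = card {k \<in> {..<n-1}. Q k}" for Q
    by (rule card_img_collect[OF rk_inj rk_img]) simp
  have cntlt: "card {c \<in> C. rk c < k} = k" if "k \<le> n - 1" for k
  proof -
    have "{m \<in> {..<n-1}. m < k} = {..<k}" using that by auto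
    thus ?thesis using cnt[of "\<lambda>m. m < k"] by simp
  qed
  have cntge: "card {c \<in> C. k \<le> rk c} = n - 1 - k" for k
  proof -
    have "{m \<in> {..<n-1}. k \<le> m} = {k..<n-1}" by auto
    thus ?thesis using cnt[of "\<lambda>m. k \<le> m"] by simp
  qed
  define D where "D = {c \<in> C. le c x}"
  define U where "U = {c \<in> C. le x c}"
  have finD: "finite D" and finU: "finite U" unfolding D_def U_def using finC by auto
  define i where "i = card D"
  define j where "j = n - 2 - card U"
  have DU: "D \<inter> U = {}" unfolding D_def U_def using anti[OF inP xP] xC by auto
  have DUC: "D \<union> U \<noteq> C"
  proof
    assume e: "D \<union> U = C"
    have "is_chain (insert x C) le" unfolding is_chain_def
    proof (intro ballI)
      fix a b assume "a \<in> insert x C" "b \<in> insert x C"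
      thus "le a b \<or> le b a" using chC refl[OF xP] e unfolding D_def U_def by blast
    qed
    hence "card (insert x C) \<le> n - 1" using maxch PC by simp
    thus False using xC finC cC n2 by simp
  qed
  have "card (D \<union> U) < card C"
    by (rule psubset_card_mono[OF finC]) (use DUC in \<open>auto simp: D_def U_def\<close>)
  hence sumDU: "card D + card U < n - 1" using card_Un_disjoint[OF finD finU DU] cC by simp
  have ij: "i \<le> j" "j < n - 1" unfolding i_def j_def using sumDU n2 by auto
  have Dfact: "le c x \<longleftrightarrow> rk c < i" if c: "c \<in> C" for c
  proof
    assume cx: "le c x"
    have "{c' \<in> C. rk c' < rk c + 1} \<subseteq> D"
    proof
      fix c' assume "c' \<in> {c' \<in> C. rk c' < rk c + 1}"
      hence c': "c' \<in> C" "rk c' \<le> rk c" by auto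
      hence "le c' c" using rk_mono[OF c' (1) c] by simp
      thus "c' \<in> D" unfolding D_def using trans[OF inP[OF c'(1)] inP[OF c] xP] cx c'(1) by simp
    qed
    hence "card {c' \<in> C. rk c' < rk c + 1} \<le> i" unfolding i_def by (rule card_mono[OF finD])
    thus "rk c < i" using cntlt[of "rk c + 1"] rk_bd[OF c] by simp
  next
    assume r: "rk c < i"
    show "le c x"
    proof (rule ccontr)
      assume ncx: "\<not> le c x"
      have "D \<subseteq> {c' \<in> C. rk c' < rk c}"
      proof
        fix c' assume "c' \<in> D"
        hence c': "c' \<in> C" "le c' x" unfolding D_def by auto
        show "c' \<in> {c' \<in> C. rk c' < rk c}"
        proof (rule ccontr)
          assume "c' \<notin> {c' \<in> C. rk c' < rk c}"
          hence "rk c \<le> rk c'" using c' by auto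
          hence "le c c'" using rk_mono[OF c c'(1)] by simp
          thus False using trans[OF inP[OF c] inP[OF c'(1)] xP] c'(2) ncx by simp
        qed
      qed
      hence "i \<le> card {c' \<in> C. rk c' < rk c}" unfolding i_def by (rule card_mono[rotated]) (simp add: finC)
      thus False using cntlt[of "rk c"] rk_bd[OF c] r by simp
    qed
  qed
  have Ufact: "le x c \<longleftrightarrow> j < rk c" if c: "c \<in> C" for c
  proof
    assume xc: "le x c"
    have "{c' \<in> C. rk c \<le> rk c'} \<subseteq> U"
    proof
      fix c' assume "c' \<in> {c' \<in> C. rk c \<le> rk c'}"
      hence c': "c' \<in> C" "rk c \<le> rk c'" by auto
      hence "le c c'" using rk_mono[OF c c'(1)] by simp
      thus "c' \<in> U" unfolding U_def using trans[OF xP inP[OF c] inP[OF c'(1)]] xc c'(1) by simp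
    qed
    hence "card {c' \<in> C. rk c \<le> rk c'} \<le> card U" by (rule card_mono[OF finU])
    thus "j < rk c" using cntge[of "rk c"] rk_bd[OF c] sumDU unfolding j_def by simp
  next
    assume r: "j < rk c"
    show "le x c"
    proof (rule ccontr)
      assume nxc: "\<not> le x c"
      have "U \<subseteq> {c' \<in> C. rk c + 1 \<le> rk c'}"
      proof
        fix c' assume "c' \<in> U"
        hence c': "c' \<in> C" "le x c'" unfolding U_def by auto
        show "c' \<in> {c' \<in> C. rk c + 1 \<le> rk c'}"
        proof (rule ccontr)
          assume "c' \<notin> {c' \<in> C. rk c + 1 \<le> rk c'}"
          hence "rk c' \<le> rk c" using c' by auto
          hence "le c' c" using rk_mono[OF c'(1) c] by simp
          thus False using trans[OF xP inP[OF c'(1)] inP[OF c]] c'(2) nxc by simp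
        qed
      qed
      hence "card U \<le> card {c' \<in> C. rk c + 1 \<le> rk c'}" by (rule card_mono[rotated]) (simp add: finC)
      thus False using cntge[of "rk c + 1"] rk_bd[OF c] r sumDU unfolding j_def by simp
    qed
  qed
  define \<phi> where "\<phi> = (\<lambda>a. if a = x then n - 1 else rk a)"
  have \<phi>C: "\<And>c. c \<in> C \<Longrightarrow> \<phi> c = rk c" unfolding \<phi>_def using xC by auto
  have \<phi>x: "\<phi> x = n - 1" unfolding \<phi>_def by simp
  have bij: "bij_betw \<phi> P {0..<n}"
  proof (rule bij_betw_imageI)
    show "inj_on \<phi> P" unfolding PC
    proof (rule inj_onI)
      fix a b assume "a \<in> insert x C" "b \<in> insert x C" "\<phi> a = \<phi> b"
      thus "a = b" using \<phi>C \<phi>x rk_bd rk_inj by (auto dest: inj_onD) (metis less_irrefl)+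
    qed
    have "\<phi> ` P = insert (n - 1) (rk ` C)" unfolding PC using \<phi>C \<phi>x by auto
    also have "\<dots> = {0..<n}" unfolding rk_img using n2 by auto
    finally show "\<phi> ` P = {0..<n}" .
  qed
  have ord: "le a b \<longleftrightarrow> canon n i j (\<phi> a) (\<phi> b)" if ab: "a \<in> P" "b \<in> P" for a b
  proof (cases "a = x")
    case True
    show ?thesis
    proof (cases "b = x")
      case True
      thus ?thesis using \<open>a = x\<close> refl[OF xP] \<phi>x n2 unfolding canon_def by simp
    next
      case False
      hence b: "b \<in> C" using ab PC by auto
      thus ?thesis using \<open>a = x\<close> \<phi>x \<phi>C[OF b] rk_bd[OF b] Ufact[OF b] n2 unfolding canon_def by auto
    qed
  next
    case False
    hence a: "a \<in> C" using ab PC by auto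
    show ?thesis
    proof (cases "b = x")
      case True
      thus ?thesis using \<phi>x \<phi>C[OF a] rk_bd[OF a] Dfact[OF a] n2 ij unfolding canon_def by auto
    next
      case False
      hence b: "b \<in> C" using ab PC by auto
      thus ?thesis using \<phi>C[OF a] \<phi>C[OF b] rk_bd[OF a] rk_bd[OF b] rk_mono[OF a b] unfolding canon_def by auto
    qed
  qed
  have "iso_btw \<phi> P le {0..<n} (canon n i j)" unfolding iso_btw_def using bij ord by blast
  thus ?thesis using ij unfolding isomorphic_def P_def by blast
qed



lemma pairs_le_card: "finite {(i, j). i \<le> j \<and> j < (m::nat)} \<and> 2 * card {(i, j). i \<le> j \<and> j < (m::nat)} = m * (m + 1)"
proof (induction m)
  case 0 thus ?case by simp
next
  case (Suc m)
  have e: "{(i, j). i \<le> j \<and> j < Suc m} = {(i, j). i \<le> j \<and> j < m} \<union> (\<lambda>i. (i, m)) ` {..m}" by auto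
  have d: "{(i, j). i \<le> j \<and> j < m} \<inter> (\<lambda>i. (i, m)) ` {..m} = {}" by auto
  have c: "card ((\<lambda>i. (i, m)) ` {..m}) = m + 1" by (subst card_image) (auto simp: inj_on_def)
  show ?case unfolding e using Suc card_Un_disjoint[OF _ _ d] c by simp
qed

lemma pairs_lt_card: "finite {(i, j). i < j \<and> j < (m::nat)} \<and> 2 * card {(i, j). i < j \<and> j < (m::nat)} = m * (m - 1)"
proof (induction m)
  case 0 thus ?case by simp
next
  case (Suc m)
  have e: "{(i, j). i < j \<and> j < Suc m} = {(i, j). i < j \<and> j < m} \<union> (\<lambda>i. (i, m)) ` {..<m}" by auto
  have d: "{(i, j). i < j \<and> j < m} \<inter> (\<lambda>i. (i, m)) ` {..<m} = {}" by auto
  have c: "card ((\<lambda>i. (i, m)) ` {..<m}) = m" by (subst card_image) (auto simp: inj_on_def)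
  have "2 * card {(i, j). i < j \<and> j < Suc m} = m * (m - 1) + 2 * m"
    unfolding e using Suc card_Un_disjoint[OF _ _ d] c by simp
  also have "\<dots> = Suc m * (Suc m - 1)" by (cases m) (auto simp: algebra_simps)
  finally show ?case unfolding e using Suc by simp
qed

lemma quot_img: "A // r = (\<lambda>x. r `` {x}) ` A"
  unfolding quotient_def by auto

lemma iso_rel_img: "iso_rel n `` {l} = {l2. isomorphic {0..<n} l {0..<n} l2}"
  unfolding iso_rel_def by auto

lemma cls_eq: assumes "isomorphic {0..<n} l1 {0..<n} l2" shows "iso_rel n `` {l1} = iso_rel n `` {l2}"
  unfolding iso_rel_img using assms isomorphic_sym isomorphic_trans by blast

lemma iso_refl: "isomorphic A l A l" unfolding isomorphic_def using iso_btw_id by blast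

lemma counts_main:
  assumes n2: "2 \<le> n"
  shows "card (posets_nl n (n - 1) // iso_rel n) = card {(i, j). i \<le> j \<and> j < n - 1}"
    and "card ({le \<in> posets_nl n (n - 1). locally_unsymmetric {0..<n} le} // iso_rel n) = card {(i, j). i < j \<and> j < n - 1}"
proof -
  define K where "K = (\<lambda>p. iso_rel n `` {canon n (fst p) (snd p)})"
  define Pa where "Pa = {(i, j). i \<le> j \<and> j < n - 1}"
  define Pb where "Pb = {(i, j). i < j \<and> j < n - 1}"
  have canonH: "canon n i j \<in> posets_nl n (n - 1)" if "i \<le> j" "j < n - 1" for i j
    unfolding posets_nl_def using canon_poset[OF that(1)] canon_height[OF that] by simp
  have injK: "inj_on K Pa"
  proof (rule inj_onI)
    fix p q assume p: "p \<in> Pa" and q: "q \<in> Pa" and e: "K p = K q"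
    have "canon n (fst q) (snd q) \<in> K q" unfolding K_def iso_rel_img using iso_refl by blast
    hence "canon n (fst q) (snd q) \<in> K p" using e by simp
    hence "isomorphic {0..<n} (canon n (fst p) (snd p)) {0..<n} (canon n (fst q) (snd q))"
      unfolding K_def iso_rel_img by simp
    hence "fst p = fst q \<and> snd p = snd q" using p q canon_iso_inj unfolding Pa_def by auto
    thus "p = q" by (simp add: prod_eq_iff)
  qed
  have finPa: "finite Pa" unfolding Pa_def using pairs_le_card by blast
  have PbPa: "Pb \<subseteq> Pa" unfolding Pa_def Pb_def by auto
  have cl: "\<exists>i j. i \<le> j \<and> j < n - 1 \<and> iso_rel n `` {le} = K (i, j)" if le: "le \<in> posets_nl n (n - 1)" for le
  proof -
    obtain i j where ij: "i \<le> j" "j < n - 1" and iso: "isomorphic {0..<n} le {0..<n} (canon n i j)"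
      using classify[OF n2, of le] le unfolding posets_nl_def by auto
    thus ?thesis using cls_eq[OF iso] unfolding K_def by auto
  qed
  have "posets_nl n (n - 1) // iso_rel n = K ` Pa"
    unfolding quot_img
  proof
    show "(\<lambda>x. iso_rel n `` {x}) ` posets_nl n (n - 1) \<subseteq> K ` Pa"
      using cl unfolding Pa_def by fastforce
    show "K ` Pa \<subseteq> (\<lambda>x. iso_rel n `` {x}) ` posets_nl n (n - 1)"
      using canonH unfolding Pa_def K_def by fastforce
  qed
  thus "card (posets_nl n (n - 1) // iso_rel n) = card {(i, j). i \<le> j \<and> j < n - 1}"
    using card_image[OF injK] unfolding Pa_def by simp
  have "{le \<in> posets_nl n (n - 1). locally_unsymmetric {0..<n} le} // iso_rel n = K ` Pb"
    unfolding quot_img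
  proof
    show "(\<lambda>x. iso_rel n `` {x}) ` {le \<in> posets_nl n (n - 1). locally_unsymmetric {0..<n} le} \<subseteq> K ` Pb"
    proof
      fix c assume "c \<in> (\<lambda>x. iso_rel n `` {x}) ` {le \<in> posets_nl n (n - 1). locally_unsymmetric {0..<n} le}"
      then obtain le where le: "le \<in> posets_nl n (n - 1)" "locally_unsymmetric {0..<n} le" and c: "c = iso_rel n `` {le}"
        by blast
      obtain i j where ij: "i \<le> j" "j < n - 1" and iso: "isomorphic {0..<n} le {0..<n} (canon n i j)"
        using classify[OF n2, of le] le(1) unfolding posets_nl_def by auto
      have "i \<noteq> j"
      proof
        assume "i = j"
        obtain f where f: "iso_btw f {0..<n} (canon n i j) {0..<n} le"
          using isomorphic_sym[OF iso] unfolding isomorphic_def by blast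
        have "twins {0..<n} le (f i) (f (n - 1))"
          using twins_iso[OF f] canon_twins[of i n] ij \<open>i = j\<close> by simp
        hence "locally_symmetric {0..<n} le"
          using le(1) unfolding posets_nl_def by (intro twins_locally_symmetric) simp_all
        thus False using le(2) unfolding locally_unsymmetric_def by simp
      qed
      hence "(i, j) \<in> Pb" using ij unfolding Pb_def by simp
      moreover have "c = K (i, j)" using cls_eq[OF iso] c unfolding K_def by simp
      ultimately show "c \<in> K ` Pb" by blast
    qed
    show "K ` Pb \<subseteq> (\<lambda>x. iso_rel n `` {x}) ` {le \<in> posets_nl n (n - 1). locally_unsymmetric {0..<n} le}"
    proof
      fix c assume "c \<in> K ` Pb"
      then obtain i j where ij: "i < j" "j < n - 1" and c: "c = K (i, j)" unfolding Pb_def by blast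
      have "locally_unsymmetric {0..<n} (canon n i j)"
        by (rule rigid_locally_unsymmetric) (rule canon_rigid[OF ij])
      moreover have "canon n i j \<in> posets_nl n (n - 1)" using canonH ij by simp
      ultimately show "c \<in> (\<lambda>x. iso_rel n `` {x}) ` {le \<in> posets_nl n (n - 1). locally_unsymmetric {0..<n} le}"
        unfolding c K_def by auto
    qed
  qed
  thus "card ({le \<in> posets_nl n (n - 1). locally_unsymmetric {0..<n} le} // iso_rel n) = card {(i, j). i < j \<and> j < n - 1}"
    using card_image[OF inj_on_subset[OF injK PbPa]] unfolding Pb_def by simp
qed

lemma n1_empty: "posets_nl 1 0 = {}"
proof -
  have "height {0..<1} le \<ge> 1" if "is_poset {0..<1} le" for le :: "nat \<Rightarrow> nat \<Rightarrow> bool"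
  proof -
    have z: "(0::nat) \<in> {0..<1}" by simp
    have "le 0 0" using that z unfolding is_poset_def by blast
    hence "is_chain {0} le" unfolding is_chain_def by auto
    thus ?thesis using height_ge[of "{0..<1}" "{0}" le] by auto
  qed
  thus ?thesis unfolding posets_nl_def by fastforce
qed

theorem mainTheorem13:
  fixes n :: nat
  assumes "1 \<le> n"
  shows "real (p_count n (n - 1)) = real n * (real n - 1) / 2 \<and>
         real (u_count n (n - 1)) = (real n - 1) * (real n - 2) / 2"
proof (cases "n = 1")
  case True
  thus ?thesis unfolding p_count_def u_count_def using n1_empty by simp
next
  case False
  hence n2: "2 \<le> n" using assms by simp
  have a: "2 * p_count n (n - 1) = (n - 1) * n"
    unfolding p_count_def counts_main(1)[OF n2] using pairs_le_card[of "n - 1"] n2 by simp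
  have b: "2 * u_count n (n - 1) = (n - 1) * (n - 2)"
    unfolding u_count_def counts_main(2)[OF n2] using pairs_lt_card[of "n - 1"] n2
    by (simp add: diff_diff_add)
  have a': "2 * real (p_count n (n - 1)) = (real n - 1) * real n"
    using arg_cong[OF a, of real] n2 by (simp add: of_nat_diff)
  have b': "2 * real (u_count n (n - 1)) = (real n - 1) * (real n - 2)"
    using arg_cong[OF b, of real] n2 by (simp add: of_nat_diff)
  show ?thesis using a' b' by (simp add: field_simps)
qed


end
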